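(* Fix $\tau>0$. For $n\ge1$ let $W_n$ be an $n\times n$ matrix of independent $\mathcal N(0,1)$ entries, and let $\Gamma_k(\tau,n)$ be the number of $k\times k$ submatrices $U$ of $W_n$ (row set and column set arbitrary $k$-subsets of $\{1,\dots,n\}$) whose entry average $F(U)$ satisfies $F(U)\ge\tau$. When $k$ is sufficiently large, for every integer $n$ satisfying \[ k\le\frac{4}{\tau^2}\ln n-\frac{4}{\tau^2}\ln\!\left(\frac{4}{\tau^2}\ln n\right)-\frac{12\ln2}{\tau^2}, \] we have \[ \frac{\operatorname{Var}\Gamma_k(\tau,n)}{(E\,\Gamma_k(\tau,n))^2}\le k^{-2}. \] *)

theory Defs
  imports "HOL-Probability.Probability"
begin

definition gauss_matrix :: "nat \<Rightarrow> ((nat \<times> nat) \<Rightarrow> real) measure" where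
  "gauss_matrix n = PiM ({..<n} \<times> {..<n}) (\<lambda>_. density lborel std_normal_density)"

definition sub_avg :: "((nat \<times> nat) \<Rightarrow> real) \<Rightarrow> nat set \<Rightarrow> nat set \<Rightarrow> real" where
  "sub_avg W R C = (\<Sum>i\<in>R. \<Sum>j\<in>C. W (i, j)) / (real (card R) * real (card C))"

definition Gamma :: "nat \<Rightarrow> real \<Rightarrow> nat \<Rightarrow> ((nat \<times> nat) \<Rightarrow> real) \<Rightarrow> nat" where
  "Gamma k \<tau> n W = card {(R, C). R \<subseteq> {..<n} \<and> card R = k \<and> C \<subseteq> {..<n} \<and> card C = k
                                \<and> sub_avg W R C \<ge> \<tau>}"

definition E_Gamma :: "nat \<Rightarrow> real \<Rightarrow> nat \<Rightarrow> real" where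
  "E_Gamma k \<tau> n = integral\<^sup>L (gauss_matrix n) (\<lambda>W. real (Gamma k \<tau> n W))"

definition Var_Gamma :: "nat \<Rightarrow> real \<Rightarrow> nat \<Rightarrow> real" where
  "Var_Gamma k \<tau> n = integral\<^sup>L (gauss_matrix n) (\<lambda>W. (real (Gamma k \<tau> n W) - E_Gamma k \<tau> n)\<^sup>2)"

end

theory Submission
  imports Defs "HOL-Real_Asymp.Real_Asymp"
begin

lemma gm_prob: "prob_space (gauss_matrix n)"
  unfolding gauss_matrix_def
  by (auto intro!: prob_space_PiM prob_space_normal_density)

lemma gm_sets: "sets (gauss_matrix n) = sets (PiM ({..<n}\<times>{..<n}) (\<lambda>_. borel))"
  unfolding gauss_matrix_def by (rule sets_PiM_cong) auto

lemma gm_space: "space (gauss_matrix n) = ({..<n}\<times>{..<n}) \<rightarrow>\<^sub>E UNIV"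
  unfolding gauss_matrix_def by (simp add: space_PiM)

lemma coord_meas: "e \<in> {..<n}\<times>{..<n} \<Longrightarrow> (\<lambda>\<omega>. \<omega> e) \<in> borel_measurable (gauss_matrix n)"
  unfolding measurable_cong_sets[OF gm_sets refl] by (rule measurable_component_singleton)

lemma gm_distr_coord:
  assumes "e \<in> {..<n}\<times>{..<n}"
  shows "distr (gauss_matrix n) lborel (\<lambda>\<omega>. \<omega> e) = density lborel std_normal_density"
proof -
  have "distr (gauss_matrix n) (density lborel std_normal_density) (\<lambda>\<omega>. \<omega> e) = density lborel std_normal_density"
    unfolding gauss_matrix_def using assms
    by (intro distr_PiM_component) (auto intro: prob_space_normal_density)
  moreover have "distr (gauss_matrix n) lborel (\<lambda>\<omega>. \<omega> e) = distr (gauss_matrix n) (density lborel std_normal_density) (\<lambda>\<omega>. \<omega> e)"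
    by (rule distr_cong) auto
  ultimately show ?thesis by simp
qed

lemma coord_distr:
  assumes "e \<in> {..<n}\<times>{..<n}"
  shows "distributed (gauss_matrix n) lborel (\<lambda>\<omega>. \<omega> e) std_normal_density"
proof -
  have "(\<lambda>\<omega>. \<omega> e) \<in> measurable (gauss_matrix n) lborel"
    using coord_meas[OF assms] by (simp add: measurable_lborel1)
  then show ?thesis unfolding distributed_def using gm_distr_coord[OF assms] by simp
qed

lemma coord_indep:
  assumes "n > 0"
  shows "prob_space.indep_vars (gauss_matrix n) (\<lambda>_. borel) (\<lambda>e \<omega>. \<omega> e) ({..<n}\<times>{..<n})"
proof -
  interpret prob_space "gauss_matrix n" by (rule gm_prob)
  let ?I = "{..<n}\<times>{..<n}"
  show ?thesis
  proof -
    have False: "?I \<noteq> {}" using assms by auto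
    have rv: "random_variable borel (\<lambda>\<omega>. \<omega> e)" for e
    proof (cases "e \<in> ?I")
      case True then show ?thesis using coord_meas[OF True] by simp
    next
      case False
      have "(\<lambda>\<omega>. \<omega> e) \<in> borel_measurable (gauss_matrix n) \<longleftrightarrow> (\<lambda>\<omega>. undefined::real) \<in> borel_measurable (gauss_matrix n)"
        apply (rule measurable_cong)
        using False by (cases e) (auto simp: gm_space PiE_def extensional_def)
      then show ?thesis by simp
    qed
    have eq1: "distr (gauss_matrix n) (Pi\<^sub>M ?I (\<lambda>i. borel)) (\<lambda>x. \<lambda>i\<in>?I. x i) = Pi\<^sub>M ?I (\<lambda>i. distr (gauss_matrix n) borel (\<lambda>\<omega>. \<omega> i))"
    proof -
    have "distr (gauss_matrix n) (Pi\<^sub>M ?I (\<lambda>i. borel)) (\<lambda>x. \<lambda>i\<in>?I. x i)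
               = distr (gauss_matrix n) (Pi\<^sub>M ?I (\<lambda>i. borel)) (\<lambda>x. x)"
      by (rule distr_cong) (auto simp: gm_space)
    also have "\<dots> = gauss_matrix n"
      by (rule distr_id2) (simp add: gm_sets)
    also have "\<dots> = Pi\<^sub>M ?I (\<lambda>i. distr (gauss_matrix n) borel (\<lambda>\<omega>. \<omega> i))"
    proof -
      have "distr (gauss_matrix n) borel (\<lambda>\<omega>. \<omega> i) = density lborel std_normal_density" if "i \<in> ?I" for i
      proof -
        have "distr (gauss_matrix n) borel (\<lambda>\<omega>. \<omega> i) = distr (gauss_matrix n) lborel (\<lambda>\<omega>. \<omega> i)"
          by (rule distr_cong) auto
        then show ?thesis using gm_distr_coord[OF that] by simp
      qed
      then show ?thesis unfolding gauss_matrix_def[of n] by (intro PiM_cong) auto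
    qed
    finally show ?thesis .
    qed
    show ?thesis by (rule iffD2[OF indep_vars_iff_distr_eq_PiM[where M'="\<lambda>_. borel" and X="\<lambda>e \<omega>. \<omega> e", OF False rv] eq1])
  qed
qed

lemma nn_integral_normal_density: "\<sigma> > 0 \<Longrightarrow> (\<integral>\<^sup>+x. ennreal (normal_density \<mu> \<sigma> x) \<partial>lborel) = 1"
  by (subst nn_integral_eq_integral) (auto intro: integrable_normal_density integral_normal_density)

lemma normal_exp_shift:
  assumes "\<sigma> > 0"
  shows "normal_density 0 \<sigma> x * exp (l * x) = exp (l^2 * \<sigma>^2 / 2) * normal_density (l * \<sigma>^2) \<sigma> x"
proof -
  have "- x\<^sup>2 / (2 * \<sigma>\<^sup>2) + l * x = l^2 * \<sigma>^2 / 2 + (- (x - l * \<sigma>\<^sup>2)\<^sup>2 / (2 * \<sigma>\<^sup>2))"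
    using assms by (simp add: field_simps power2_eq_square)
  then have "exp (- x\<^sup>2 / (2 * \<sigma>\<^sup>2)) * exp (l * x) = exp (l^2 * \<sigma>^2 / 2) * exp (- (x - l * \<sigma>\<^sup>2)\<^sup>2 / (2 * \<sigma>\<^sup>2))"
    by (simp add: exp_add[symmetric])
  then show ?thesis unfolding normal_density_def by simp
qed

lemma normal_upper_tail:
  assumes "prob_space M" and D: "distributed M lborel Y (normal_density 0 \<sigma>)" and "\<sigma> > 0" "a \<ge> 0"
  shows "measure M {\<omega>\<in>space M. Y \<omega> \<ge> a} \<le> exp (- (a\<^sup>2) / (2 * \<sigma>\<^sup>2))"
proof -
  interpret prob_space M by fact
  define l where "l = a / \<sigma>^2"
  have "emeasure M (Y -` {a..} \<inter> space M) = (\<integral>\<^sup>+x. ennreal (normal_density 0 \<sigma> x) * indicator {a..} x \<partial>lborel)"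
    by (rule distributed_emeasure[OF D]) simp
  also have "\<dots> \<le> (\<integral>\<^sup>+x. ennreal (exp (- l * a)) * ennreal (normal_density 0 \<sigma> x * exp (l * x)) \<partial>lborel)"
  proof (rule nn_integral_mono)
    fix x
    have "l \<ge> 0" using assms by (simp add: l_def)
    have "indicator {a..} x \<le> exp (- l * a) * exp (l * x)"
    proof (cases "x \<ge> a")
      case True
      then have "l * a \<le> l * x" using \<open>l \<ge> 0\<close> by (simp add: mult_left_mono)
      then have "1 \<le> exp (- l * a + l * x)" by simp
      then show ?thesis using True by (simp add: exp_add[symmetric])
    next
      case False then show ?thesis by simp
    qed
    then have "normal_density 0 \<sigma> x * indicator {a..} x \<le> exp (- l * a) * (normal_density 0 \<sigma> x * exp (l * x))"
      using normal_density_nonneg[of 0 \<sigma> x] by (simp add: mult_left_mono algebra_simps)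
    then show "ennreal (normal_density 0 \<sigma> x) * indicator {a..} x \<le> ennreal (exp (- l * a)) * ennreal (normal_density 0 \<sigma> x * exp (l * x))"
      by (cases "a \<le> x") (auto simp: ennreal_mult'[symmetric] indicator_def intro!: ennreal_leI)
  qed
  also have "\<dots> = ennreal (exp (- l * a)) * (\<integral>\<^sup>+x. ennreal (normal_density 0 \<sigma> x * exp (l * x)) \<partial>lborel)"
    by (rule nn_integral_cmult) simp
  also have "(\<integral>\<^sup>+x. ennreal (normal_density 0 \<sigma> x * exp (l * x)) \<partial>lborel)
      = (\<integral>\<^sup>+x. ennreal (exp (l^2 * \<sigma>^2 / 2)) * ennreal (normal_density (l * \<sigma>^2) \<sigma> x) \<partial>lborel)"
    using assms by (simp add: normal_exp_shift ennreal_mult')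
  also have "\<dots> = ennreal (exp (l^2 * \<sigma>^2 / 2))"
    by (subst nn_integral_cmult) (simp_all add: nn_integral_normal_density assms)
  also have "ennreal (exp (- l * a)) * ennreal (exp (l^2 * \<sigma>^2 / 2)) = ennreal (exp (- (a\<^sup>2) / (2 * \<sigma>\<^sup>2)))"
  proof -
    have "- l * a + l^2 * \<sigma>^2 / 2 = - (a\<^sup>2) / (2 * \<sigma>\<^sup>2)"
      using assms by (simp add: l_def field_simps power2_eq_square)
    then show ?thesis by (simp add: ennreal_mult'[symmetric] exp_add[symmetric])
  qed
  finally have "emeasure M (Y -` {a..} \<inter> space M) \<le> ennreal (exp (- (a\<^sup>2) / (2 * \<sigma>\<^sup>2)))" .
  moreover have "Y -` {a..} \<inter> space M = {\<omega>\<in>space M. Y \<omega> \<ge> a}" by auto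
  ultimately show ?thesis by (simp add: emeasure_eq_measure)
qed

lemma normal_lower_tail:
  assumes "prob_space M" and D: "distributed M lborel Y (normal_density 0 \<sigma>)" and "\<sigma> > 0" "a \<ge> 0" "h > 0"
  shows "measure M {\<omega>\<in>space M. Y \<omega> \<ge> a} \<ge> h * normal_density 0 \<sigma> (a + h)"
proof -
  interpret prob_space M by fact
  have "ennreal (h * normal_density 0 \<sigma> (a + h)) = (\<integral>\<^sup>+x. ennreal (normal_density 0 \<sigma> (a + h)) * indicator {a..a+h} x \<partial>lborel)"
    using assms by (simp add: nn_integral_cmult_indicator ennreal_mult' mult.commute)
  also have "\<dots> \<le> (\<integral>\<^sup>+x. ennreal (normal_density 0 \<sigma> x) * indicator {a..} x \<partial>lborel)"
  proof (rule nn_integral_mono)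
    fix x
    show "ennreal (normal_density 0 \<sigma> (a + h)) * indicator {a..a+h} x \<le> ennreal (normal_density 0 \<sigma> x) * indicator {a..} x"
    proof (cases "a \<le> x \<and> x \<le> a + h")
      case True
      then have "x^2 \<le> (a+h)^2" using assms by (intro power_mono) auto
      then have "normal_density 0 \<sigma> (a + h) \<le> normal_density 0 \<sigma> x"
        using assms unfolding normal_density_def
        by (intro mult_left_mono) (auto simp: divide_right_mono)
      then show ?thesis using True by (simp add: indicator_def)
    next
      case False then show ?thesis by (simp add: indicator_def)
    qed
  qed
  also have "\<dots> = emeasure M (Y -` {a..} \<inter> space M)"
    by (rule distributed_emeasure[OF D, symmetric]) simp
  also have "Y -` {a..} \<inter> space M = {\<omega>\<in>space M. Y \<omega> \<ge> a}" by auto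
  finally show ?thesis using assms by (simp add: emeasure_eq_measure)
qed

lemma wsum_distr:
  assumes "n > 0" "A \<subseteq> {..<n}\<times>{..<n}" "A \<noteq> {}" "\<And>e. e \<in> A \<Longrightarrow> w e \<noteq> 0"
  shows "distributed (gauss_matrix n) lborel (\<lambda>\<omega>. \<Sum>e\<in>A. w e * \<omega> e)
           (normal_density 0 (sqrt (\<Sum>e\<in>A. (w e)\<^sup>2)))"
proof -
  interpret prob_space "gauss_matrix n" by (rule gm_prob)
  have fin: "finite A" using assms(2) finite_subset by blast
  have ind: "indep_vars (\<lambda>_. borel) (\<lambda>e \<omega>. w e * \<omega> e) A"
    using indep_vars_compose2[OF indep_vars_subset[OF coord_indep[OF assms(1)] assms(2)], of "\<lambda>e x. w e * x" "\<lambda>_. borel"]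
    by simp
  have dis: "distributed (gauss_matrix n) lborel (\<lambda>\<omega>. w e * \<omega> e) (normal_density 0 \<bar>w e\<bar>)" if "e \<in> A" for e
  proof -
    have e: "e \<in> {..<n}\<times>{..<n}" using that assms by auto
    show ?thesis using normal_density_affine[OF coord_distr[OF e], where \<alpha>="w e" and \<beta>=0] that assms by simp
  qed
  have "distributed (gauss_matrix n) lborel (\<lambda>\<omega>. \<Sum>e\<in>A. w e * \<omega> e)
           (normal_density (\<Sum>e\<in>A. 0) (sqrt (\<Sum>e\<in>A. (\<bar>w e\<bar>)\<^sup>2)))"
    by (rule sum_indep_normal[OF fin assms(3) ind]) (use assms dis in auto)
  then show ?thesis by simp
qed

lemma sum_distr:
  assumes "n > 0" "A \<subseteq> {..<n}\<times>{..<n}" "A \<noteq> {}"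
  shows "distributed (gauss_matrix n) lborel (\<lambda>\<omega>. \<Sum>e\<in>A. \<omega> e) (normal_density 0 (sqrt (card A)))"
  using wsum_distr[OF assms, of "\<lambda>_. 1"] by simp

lemma pair_indep:
  assumes "n > 0" "A \<subseteq> {..<n}\<times>{..<n}" "B \<subseteq> {..<n}\<times>{..<n}" "A \<inter> B = {}"
  shows "measure (gauss_matrix n) {\<omega>\<in>space (gauss_matrix n). y \<le> (\<Sum>e\<in>A. \<omega> e) \<and> y \<le> (\<Sum>e\<in>B. \<omega> e)}
       = measure (gauss_matrix n) {\<omega>\<in>space (gauss_matrix n). y \<le> (\<Sum>e\<in>A. \<omega> e)}
         * measure (gauss_matrix n) {\<omega>\<in>space (gauss_matrix n). y \<le> (\<Sum>e\<in>B. \<omega> e)}"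
proof -
  interpret prob_space "gauss_matrix n" by (rule gm_prob)
  have "indep_var
    borel ((\<lambda>f. \<Sum>e\<in>A. f e) \<circ> (\<lambda>\<omega>. restrict (\<lambda>e. \<omega> e) A))
    borel ((\<lambda>f. \<Sum>e\<in>B. f e) \<circ> (\<lambda>\<omega>. restrict (\<lambda>e. \<omega> e) B))"
    using assms by (intro indep_var_compose[OF indep_var_restrict[OF coord_indep[OF assms(1)]]]) auto
  also have "((\<lambda>f. \<Sum>e\<in>A. f e) \<circ> (\<lambda>\<omega>. restrict (\<lambda>e. \<omega> e) A)) = (\<lambda>\<omega>. \<Sum>e\<in>A. \<omega> e)"
    by (auto simp: fun_eq_iff cong: rev_conj_cong)
  also have "((\<lambda>f. \<Sum>e\<in>B. f e) \<circ> (\<lambda>\<omega>. restrict (\<lambda>e. \<omega> e) B)) = (\<lambda>\<omega>. \<Sum>e\<in>B. \<omega> e)"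
    by (auto simp: fun_eq_iff cong: rev_conj_cong)
  finally have ind: "indep_var borel (\<lambda>\<omega>. \<Sum>e\<in>A. \<omega> e) borel (\<lambda>\<omega>. \<Sum>e\<in>B. \<omega> e)" .
  have "\<P>(x in gauss_matrix n. (\<Sum>e\<in>A. x e) \<in> {y..} \<and> (\<Sum>e\<in>B. x e) \<in> {y..})
     = \<P>(x in gauss_matrix n. (\<Sum>e\<in>A. x e) \<in> {y..}) * \<P>(x in gauss_matrix n. (\<Sum>e\<in>B. x e) \<in> {y..})"
    by (rule prob_indep_random_variable[OF ind]) auto
  then show ?thesis by simp
qed

lemma pair_upper:
  assumes "n > 0" "A \<subseteq> {..<n}\<times>{..<n}" "B \<subseteq> {..<n}\<times>{..<n}" "A \<noteq> {}" "y \<ge> 0"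
  shows "measure (gauss_matrix n) {\<omega>\<in>space (gauss_matrix n). y \<le> (\<Sum>e\<in>A. \<omega> e) \<and> y \<le> (\<Sum>e\<in>B. \<omega> e)}
       \<le> exp (- ((2*y)\<^sup>2) / (2 * (card A + card B + 2 * card (A \<inter> B))))"
proof -
  interpret prob_space "gauss_matrix n" by (rule gm_prob)
  define w where "w e = (if e \<in> A then 1 else 0) + (if e \<in> B then 1 else (0::real))" for e
  have fA: "finite A" and fB: "finite B" using assms finite_subset by blast+
  have AB: "A \<union> B \<subseteq> {..<n}\<times>{..<n}" "A \<union> B \<noteq> {}" using assms by auto
  have D: "distributed (gauss_matrix n) lborel (\<lambda>\<omega>. \<Sum>e\<in>A \<union> B. w e * \<omega> e)
           (normal_density 0 (sqrt (\<Sum>e\<in>A \<union> B. (w e)\<^sup>2)))"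
    by (rule wsum_distr[OF assms(1) AB]) (auto simp: w_def)
  have sumeq: "(\<Sum>e\<in>A \<union> B. w e * \<omega> e) = (\<Sum>e\<in>A. \<omega> e) + (\<Sum>e\<in>B. \<omega> e)" for \<omega>
  proof -
    have "(\<Sum>e\<in>A \<union> B. w e * \<omega> e) = (\<Sum>e\<in>A \<union> B. (if e \<in> A then \<omega> e else 0)) + (\<Sum>e\<in>A \<union> B. (if e \<in> B then \<omega> e else 0))"
      by (simp add: sum.distrib[symmetric]) (intro sum.cong, auto simp: w_def algebra_simps)
    also have "\<dots> = (\<Sum>e\<in>A. \<omega> e) + (\<Sum>e\<in>B. \<omega> e)"
      using fA fB by (simp add: sum.If_cases Int_absorb1 Int_absorb2)
    finally show ?thesis .
  qed
  have sq: "(\<Sum>e\<in>A \<union> B. (w e)\<^sup>2) = real (card A + card B + 2 * card (A \<inter> B))"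
  proof -
    have "(\<Sum>e\<in>A \<union> B. (w e)\<^sup>2) = (\<Sum>e\<in>A \<union> B. (if e \<in> A then 1 else 0) + (if e \<in> B then 1 else 0) + 2 * (if e \<in> A \<inter> B then 1 else (0::real)))"
      by (intro sum.cong) (auto simp: w_def power2_eq_square)
    also have "\<dots> = real (card A) + real (card B) + 2 * real (card (A \<inter> B))"
    proof -
      have e: "(A \<union> B) \<inter> {e \<in> A. e \<in> B} = A \<inter> B" by auto
      show ?thesis
      using fA fB by (simp add: sum.distrib sum_distrib_left[symmetric] sum.If_cases Int_absorb1 Int_absorb2 Int_commute e)
    qed
    finally show ?thesis by simp
  qed
  have "{\<omega>\<in>space (gauss_matrix n). y \<le> (\<Sum>e\<in>A. \<omega> e) \<and> y \<le> (\<Sum>e\<in>B. \<omega> e)}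
        \<subseteq> {\<omega>\<in>space (gauss_matrix n). 2*y \<le> (\<Sum>e\<in>A \<union> B. w e * \<omega> e)}"
    by (auto simp: sumeq)
  then have "measure (gauss_matrix n) {\<omega>\<in>space (gauss_matrix n). y \<le> (\<Sum>e\<in>A. \<omega> e) \<and> y \<le> (\<Sum>e\<in>B. \<omega> e)}
        \<le> measure (gauss_matrix n) {\<omega>\<in>space (gauss_matrix n). 2*y \<le> (\<Sum>e\<in>A \<union> B. w e * \<omega> e)}"
  proof (rule finite_measure_mono)
    have "(\<lambda>\<omega>. \<Sum>e\<in>A \<union> B. w e * \<omega> e) \<in> borel_measurable (gauss_matrix n)"
      using distributed_measurable[OF D] by simp
    then show "{\<omega>\<in>space (gauss_matrix n). 2*y \<le> (\<Sum>e\<in>A \<union> B. w e * \<omega> e)} \<in> sets (gauss_matrix n)"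
      by measurable
  qed
  also have "\<dots> \<le> exp (- ((2*y)\<^sup>2) / (2 * (sqrt (\<Sum>e\<in>A \<union> B. (w e)\<^sup>2))\<^sup>2))"
  proof (rule normal_upper_tail[OF gm_prob D])
    have "(\<Sum>e\<in>A \<union> B. (w e)\<^sup>2) > 0" using sq AB fA fB
      by (metis card_gt_0_iff assms(4) add_pos_nonneg add_pos_pos of_nat_0_less_iff zero_le less_add_same_cancel1 zero_less_iff_neq_zero)
    then show "sqrt (\<Sum>e\<in>A \<union> B. (w e)\<^sup>2) > 0" by simp
  qed (use assms in auto)
  also have "\<dots> = exp (- ((2*y)\<^sup>2) / (2 * (card A + card B + 2 * card (A \<inter> B))))"
    using sq by (simp add: sum_nonneg)
  finally show ?thesis .
qed

lemma choose_shift_bound: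
  fixes n k r :: nat
  assumes "r \<le> k" "k \<le> n"
  shows "(n choose (k - r)) * (n - k)^r \<le> (n choose k) * k^r"
  using assms(1)
proof (induction r)
  case 0 then show ?case by simp
next
  case (Suc r)
  define j where "j = k - r"
  have j1: "j \<ge> 1" and jk: "j \<le> k" and km: "k - Suc r = j - 1" using Suc.prems by (auto simp: j_def)
  have IH: "(n choose j) * (n - k)^r \<le> (n choose k) * k^r" using Suc by (simp add: j_def)
  have id: "(n choose (j - 1)) * (n - (j - 1)) = (n choose j) * j"
  proof -
    have "j * (n choose j) = n * ((n - 1) choose (j - 1))" using j1 by (simp add: times_binomial_minus1_eq)
    moreover have "(n - (j - 1)) * (n choose (j - 1)) = n * ((n - 1) choose (j - 1))" by (rule binomial_absorb_comp)
    ultimately show ?thesis by (simp add: mult.commute)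
  qed
  have "(n choose (k - Suc r)) * (n - k)^Suc r = (n choose (j - 1)) * (n - k) * (n - k)^r"
    by (simp add: km)
  also have "\<dots> \<le> (n choose (j - 1)) * (n - (j - 1)) * (n - k)^r"
    using jk by (intro mult_right_mono mult_left_mono) auto
  also have "\<dots> = j * ((n choose j) * (n - k)^r)" by (simp only: id) (simp add: algebra_simps)
  also have "\<dots> \<le> k * ((n choose k) * k^r)" using mult_mono[OF jk IH] by simp
  also have "\<dots> = (n choose k) * k ^ Suc r" by simp
  finally show ?case .
qed

lemma choose_ratio_bound:
  fixes n k r :: nat
  assumes "r \<le> k" "2 * k \<le> n" "k \<ge> 1"
  shows "real ((n - k) choose (k - r)) / real (n choose k) \<le> (real k / real (n - k))^r"
proof -
  have pos: "real (n choose k) > 0" using assms by simp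
  have nk: "real (n - k) > 0" using assms by (cases k) auto
  have "(n - k) choose (k - r) \<le> n choose (k - r)" by (rule binomial_right_mono) simp
  then have "real ((n - k) choose (k - r)) * real (n - k)^r \<le> real (n choose (k - r)) * real (n - k)^r"
    by (intro mult_right_mono) auto
  also have "\<dots> \<le> real (n choose k) * real k^r"
  proof -
    have "real ((n choose (k - r)) * (n - k)^r) \<le> real ((n choose k) * k^r)"
      using choose_shift_bound[OF assms(1), of n] assms by (simp only: of_nat_le_iff)
    then show ?thesis by (simp only: of_nat_mult of_nat_power)
  qed
  finally have "real ((n - k) choose (k - r)) * real (n - k)^r \<le> real (n choose k) * real k^r" .
  then show ?thesis using pos nk by (simp add: field_simps power_divide)
qed

lemma frac_mono_aux:
  fixes a m M :: real
  assumes "a > 0" "0 \<le> m" "m \<le> M"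
  shows "m / (a + m) \<le> M / (a + M)"
  using assms by (simp add: field_simps mult_right_mono)

lemma div_helper: "(0::real) < D \<Longrightarrow> X * D \<le> 1 \<Longrightarrow> X \<le> 1 / D"
  by (simp add: le_divide_eq)

lemma core_bound:
  fixes t q Br Bc c1 :: real and k r c :: nat
  assumes t: "t > 0" and r: "1 \<le> r" "r \<le> k" and c: "1 \<le> c" "c \<le> k"
    and q: "0 \<le> q" "q \<le> exp (- (t\<^sup>2 * k / 4)) / 4"
    and Br: "0 \<le> Br" "Br \<le> real k ^ r" "Br \<le> real k ^ (k - r)"
    and Bc: "0 \<le> Bc" "Bc \<le> real k ^ c" "Bc \<le> real k ^ (k - c)"
    and c1: "c1 \<ge> 0"
    and E2: "4 * c1 * t\<^sup>2 * real k ^ 8 \<le> exp (t\<^sup>2 * real k / 10)"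
    and E3: "real k \<le> exp (t\<^sup>2 * real k / 20)"
    and E4: "4 * c1 * t\<^sup>2 * real k ^ 6 * exp (5 * (ln (real k))\<^sup>2 / t\<^sup>2) \<le> 4 ^ k"
  shows "(Br * q^r) * (Bc * q^c) * exp (- (t\<^sup>2 * real k ^ 4) / ((real k)\<^sup>2 + real r * real c))
           * (c1 * t\<^sup>2 * (real k)\<^sup>2 * exp (t\<^sup>2 * (real k)\<^sup>2)) \<le> 1 / (4 * real k ^ 4)"
proof -
  define K where "K = real k"
  define l where "l = t\<^sup>2 * K / 4"
  define s where "s = r + c"
  define S where "S = real s"
  have K1: "K \<ge> 1" using r by (simp add: K_def)
  have l0: "l \<ge> 0" using t K1 by (simp add: l_def)
  have S2: "S \<ge> 2" using r c by (simp add: S_def s_def)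
  have SK: "S \<le> 2 * K" using r c by (simp add: S_def s_def K_def)
  define m where "m = real r * real c"
  have m0: "m \<ge> 0" by (simp add: m_def)
  have mS: "m \<le> S\<^sup>2 / 4"
  proof -
    have "0 \<le> (real r - real c)\<^sup>2" by simp
    then show ?thesis by (simp add: m_def S_def s_def power2_eq_square algebra_simps)
  qed
  have qpow: "q^r * q^c \<le> exp (- l * S) * (1/4)^s"
  proof -
    have "q^r * q^c = q^s" by (simp add: s_def power_add)
    also have "\<dots> \<le> (exp (- l) / 4)^s" using q by (intro power_mono) (auto simp: l_def K_def)
    also have "\<dots> = exp (- l * S) * (1/4)^s"
      by (simp add: S_def power_divide exp_of_nat_mult[symmetric] mult.commute)
    finally show ?thesis .
  qed
  have a: "K\<^sup>2 + m > 0" using K1 m0 by (smt (verit) one_le_power)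
  have b: "4*K\<^sup>2 + S\<^sup>2 > 0" using K1 by (smt (verit) one_le_power zero_le_power2)
  have e1: "- (t\<^sup>2 * K ^ 4) / (K\<^sup>2 + m) + t\<^sup>2 * K\<^sup>2 = t\<^sup>2 * K\<^sup>2 * (m / (K\<^sup>2 + m))"
    using a by (simp add: field_simps power2_eq_square power4_eq_xxxx)
  have e2: "t\<^sup>2 * K\<^sup>2 * (S\<^sup>2 / (4*K\<^sup>2 + S\<^sup>2)) + l * S * (2*K - S)\<^sup>2 / (4*K\<^sup>2 + S\<^sup>2) = l * S"
  proof -
    have "t\<^sup>2 * K\<^sup>2 * S\<^sup>2 + l * S * (2*K - S)\<^sup>2 = l * S * (4*K\<^sup>2 + S\<^sup>2)"
      by (simp add: l_def power2_eq_square algebra_simps)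
    moreover have "t\<^sup>2 * K\<^sup>2 * (S\<^sup>2 / (4*K\<^sup>2 + S\<^sup>2)) + l * S * (2*K - S)\<^sup>2 / (4*K\<^sup>2 + S\<^sup>2)
        = (t\<^sup>2 * K\<^sup>2 * S\<^sup>2 + l * S * (2*K - S)\<^sup>2) / (4*K\<^sup>2 + S\<^sup>2)"
      by (simp add: add_divide_distrib)
    ultimately show ?thesis using b by simp
  qed
  have expo: "exp (- (t\<^sup>2 * K ^ 4) / (K\<^sup>2 + m)) * exp (t\<^sup>2 * K\<^sup>2) * exp (- l * S)
              = exp (- (l * S * (2*K - S)\<^sup>2 / (4*K\<^sup>2 + S\<^sup>2)) + t\<^sup>2 * K\<^sup>2 * (m / (K\<^sup>2 + m) - S\<^sup>2 / (4*K\<^sup>2 + S\<^sup>2)))"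
  proof -
    have "- (t\<^sup>2 * K ^ 4) / (K\<^sup>2 + m) + t\<^sup>2 * K\<^sup>2 + - l * S
        = - (l * S * (2*K - S)\<^sup>2 / (4*K\<^sup>2 + S\<^sup>2)) + t\<^sup>2 * K\<^sup>2 * (m / (K\<^sup>2 + m) - S\<^sup>2 / (4*K\<^sup>2 + S\<^sup>2))"
      using e1 e2 by (simp add: algebra_simps)
    then show ?thesis by (simp add: exp_add[symmetric])
  qed
  have mono_part: "t\<^sup>2 * K\<^sup>2 * (m / (K\<^sup>2 + m) - S\<^sup>2 / (4*K\<^sup>2 + S\<^sup>2)) \<le> 0"
  proof -
    have "m / (K\<^sup>2 + m) \<le> S\<^sup>2/4 / (K\<^sup>2 + S\<^sup>2/4)"
      using K1 m0 mS by (intro frac_mono_aux) (auto intro: add_pos_nonneg)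
    also have "S\<^sup>2/4 / (K\<^sup>2 + S\<^sup>2/4) = S\<^sup>2 / (4*K\<^sup>2 + S\<^sup>2)" by (simp add: field_simps)
    finally show ?thesis by (simp add: mult_nonneg_nonpos)
  qed
  define Phi where "Phi = l * S * (2*K - S)\<^sup>2 / (4*K\<^sup>2 + S\<^sup>2)"
  have main: "(Br * q^r) * (Bc * q^c) * exp (- (t\<^sup>2 * K ^ 4) / (K\<^sup>2 + m)) * (c1 * t\<^sup>2 * K\<^sup>2 * exp (t\<^sup>2 * K\<^sup>2))
       \<le> (Br * Bc) * (c1 * t\<^sup>2 * K\<^sup>2) * (1/4)^s * exp (- Phi)"
  proof -
    have "(Br * q^r) * (Bc * q^c) * exp (- (t\<^sup>2 * K ^ 4) / (K\<^sup>2 + m)) * (c1 * t\<^sup>2 * K\<^sup>2 * exp (t\<^sup>2 * K\<^sup>2))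
        = (Br * Bc) * (c1 * t\<^sup>2 * K\<^sup>2) * (q^r * q^c) * (exp (- (t\<^sup>2 * K ^ 4) / (K\<^sup>2 + m)) * exp (t\<^sup>2 * K\<^sup>2))"
      by (simp add: algebra_simps)
    also have "\<dots> \<le> (Br * Bc) * (c1 * t\<^sup>2 * K\<^sup>2) * (exp (- l * S) * (1/4)^s) * (exp (- (t\<^sup>2 * K ^ 4) / (K\<^sup>2 + m)) * exp (t\<^sup>2 * K\<^sup>2))"
      using qpow Br Bc c1 by (intro mult_right_mono mult_left_mono) auto
    also have "\<dots> = (Br * Bc) * (c1 * t\<^sup>2 * K\<^sup>2) * (1/4)^s * (exp (- (t\<^sup>2 * K ^ 4) / (K\<^sup>2 + m)) * exp (t\<^sup>2 * K\<^sup>2) * exp (- l * S))"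
      by (simp add: algebra_simps)
    also have "\<dots> \<le> (Br * Bc) * (c1 * t\<^sup>2 * K\<^sup>2) * (1/4)^s * exp (- Phi)"
      unfolding expo Phi_def using mono_part Br Bc c1
      by (intro mult_left_mono) (auto intro!: mult_nonneg_nonneg)
    finally show ?thesis .
  qed
  have goal_eq: "1 / (4 * real k ^ 4) = 1 / (4 * K ^ 4)" by (simp add: K_def)
  show ?thesis
  proof (cases "S \<le> K")
    case True
    have B: "Br * Bc \<le> K ^ s" using Br Bc
      by (simp add: s_def power_add K_def) (rule mult_mono, auto)
    have Phi: "Phi \<ge> l * S / 5"
    proof -
      have "(2*K - S)\<^sup>2 \<ge> K\<^sup>2" using True S2 K1 by (intro power_mono) auto
      moreover have "4*K\<^sup>2 + S\<^sup>2 \<le> 5 * K\<^sup>2"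
      proof -
        have "S\<^sup>2 \<le> K\<^sup>2" using True S2 by (intro power_mono) auto
        then show ?thesis by linarith
      qed
      ultimately have "(2*K - S)\<^sup>2 / (4*K\<^sup>2 + S\<^sup>2) \<ge> 1/5"
        using b by (simp add: le_divide_eq)
      moreover have "Phi = (l * S) * ((2*K - S)\<^sup>2 / (4*K\<^sup>2 + S\<^sup>2))" by (simp add: Phi_def)
      moreover have "l * S \<ge> 0" using l0 S2 by simp
      ultimately show ?thesis by (metis mult_left_mono times_divide_eq_right mult_1_right)
    qed
    have base: "K * exp (- l / 5) \<le> 1" and base0: "0 \<le> K * exp (- l / 5)"
    proof -
      have "K \<le> exp (l / 5)" using E3 by (simp add: K_def l_def)
      then show "K * exp (- l / 5) \<le> 1" by (simp add: exp_minus field_simps)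
      show "0 \<le> K * exp (- l / 5)" using K1 by simp
    qed
    have "(Br * Bc) * (c1 * t\<^sup>2 * K\<^sup>2) * (1/4)^s * exp (- Phi) \<le> K ^ s * (c1 * t\<^sup>2 * K\<^sup>2) * 1 * exp (- (l * S / 5))"
      using B Phi c1 Br Bc K1 by (intro mult_mono) (auto simp: power_le_one)
    also have "\<dots> = (c1 * t\<^sup>2 * K\<^sup>2) * (K * exp (- l / 5)) ^ s"
    proof -
      have "exp (- (l * S / 5)) = exp (real s * (- l / 5))" by (simp add: S_def algebra_simps)
      also have "\<dots> = exp (- l / 5) ^ s" by (simp only: exp_of_nat_mult)
      finally show ?thesis by (simp add: power_mult_distrib mult_ac)
    qed
    also have "\<dots> \<le> (c1 * t\<^sup>2 * K\<^sup>2) * (K * exp (- l / 5)) ^ 2"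
      using base base0 S2 c1 by (intro mult_left_mono power_decreasing) (auto simp: S_def)
    also have "\<dots> = c1 * t\<^sup>2 * K ^ 4 * exp (- (t\<^sup>2 * K / 10))"
    proof -
      have a1: "- l / 5 + - l / 5 = - (t\<^sup>2 * K / 10)" by (simp add: l_def field_simps)
      have a2: "exp (- l / 5) ^ 2 = exp (- (t\<^sup>2 * K / 10))"
        unfolding power2_eq_square exp_add[symmetric] a1 ..
      have a3: "K\<^sup>2 * K\<^sup>2 = K ^ 4" by (simp flip: power_add)
      have "(c1 * t\<^sup>2 * K\<^sup>2) * (K * exp (- l / 5)) ^ 2 = c1 * t\<^sup>2 * (K\<^sup>2 * K\<^sup>2) * exp (- l / 5) ^ 2"
        by (simp add: power_mult_distrib mult_ac)
      then show ?thesis unfolding a2 a3 .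
    qed
    also have "\<dots> \<le> 1 / (4 * K ^ 4)"
    proof -
      have e: "4 * c1 * t\<^sup>2 * K ^ 8 \<le> exp (t\<^sup>2 * K / 10)" using E2 by (simp add: K_def)
      have K8: "K ^ 8 = K ^ 4 * K ^ 4" by (subst power_add[symmetric]) simp
      have "(c1 * t\<^sup>2 * K ^ 4 * exp (- (t\<^sup>2 * K / 10))) * (4 * K^4) = (4 * c1 * t\<^sup>2 * K ^ 8) * exp (- (t\<^sup>2 * K / 10))"
        unfolding K8 by (simp add: mult_ac)
      also have "\<dots> \<le> exp (t\<^sup>2 * K / 10) * exp (- (t\<^sup>2 * K / 10))"
        using e by (intro mult_right_mono) auto
      also have "\<dots> = 1" by (simp flip: exp_add)
      finally show ?thesis using K1 by (intro div_helper) auto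
    qed
    finally have "(Br * Bc) * (c1 * t\<^sup>2 * K\<^sup>2) * (1/4)^s * exp (- Phi) \<le> 1 / (4 * real k ^ 4)" unfolding goal_eq .
    then show ?thesis using main[unfolded m_def K_def] unfolding K_def by linarith
  next
    case False
    define mm where "mm = 2 * k - s"
    have smm: "real mm = 2 * K - S" using SK by (simp add: mm_def K_def S_def s_def of_nat_diff)
    have B: "Br * Bc \<le> K ^ mm"
    proof -
      have "Br * Bc \<le> K ^ (k - r) * K ^ (k - c)" using Br Bc by (simp add: K_def) (rule mult_mono, auto)
      also have "\<dots> = K ^ mm" using r c by (simp add: power_add[symmetric] mm_def s_def mult_2)
      finally show ?thesis .
    qed
    have Phi: "Phi \<ge> t\<^sup>2 * (real mm)\<^sup>2 / 20"
    proof -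
      have "l * S / (4*K\<^sup>2 + S\<^sup>2) \<ge> t\<^sup>2 / 20"
      proof -
        have "(S - K) * (4*K - S) \<ge> 0" using False SK by (intro mult_nonneg_nonneg) auto
        then have "5 * K * S \<ge> 4*K\<^sup>2 + S\<^sup>2" by (simp add: algebra_simps power2_eq_square)
        then have "t\<^sup>2 * (4*K\<^sup>2 + S\<^sup>2) \<le> t\<^sup>2 * (5 * K * S)" by (intro mult_left_mono) auto
        moreover have "4*K\<^sup>2 + S\<^sup>2 > 0" using K1 by (smt (verit) one_le_power zero_le_power2)
        ultimately show ?thesis by (simp add: l_def field_simps)
      qed
      then have "l * S / (4*K\<^sup>2 + S\<^sup>2) * (2*K - S)\<^sup>2 \<ge> t\<^sup>2 / 20 * (2*K - S)\<^sup>2"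
        by (intro mult_right_mono) auto
      then show ?thesis unfolding Phi_def smm by (simp add: field_simps)
    qed
    have quad: "real mm * ln K - t\<^sup>2 * (real mm)\<^sup>2 / 20 \<le> 5 * (ln K)\<^sup>2 / t\<^sup>2"
    proof -
      have "0 \<le> (t\<^sup>2 * real mm - 10 * ln K)\<^sup>2" by simp
      then have "20 * t\<^sup>2 * (real mm * ln K) \<le> t^4 * (real mm)\<^sup>2 + 100 * (ln K)\<^sup>2"
        by (simp add: power2_eq_square algebra_simps power4_eq_xxxx)
      then show ?thesis using t by (simp add: field_simps power2_eq_square power4_eq_xxxx)
    qed
    have Kmm: "K ^ mm = exp (real mm * ln K)"
    proof -
      have "exp (real mm * ln K) = exp (ln K) ^ mm" by (simp add: exp_of_nat_mult)
      then show ?thesis using K1 by simp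
    qed
    have "(Br * Bc) * (c1 * t\<^sup>2 * K\<^sup>2) * (1/4)^s * exp (- Phi) \<le> K ^ mm * (c1 * t\<^sup>2 * K\<^sup>2) * (1/4)^k * exp (- (t\<^sup>2 * (real mm)\<^sup>2 / 20))"
    proof (intro mult_mono)
      show "(1/4::real)^s \<le> (1/4)^k" using False by (intro power_decreasing) (auto simp: S_def K_def)
    qed (use B Phi c1 Br Bc K1 in auto)
    also have "\<dots> = (c1 * t\<^sup>2 * K\<^sup>2) * (1/4)^k * exp (real mm * ln K - t\<^sup>2 * (real mm)\<^sup>2 / 20)"
    proof -
      have "K ^ mm * exp (- (t\<^sup>2 * (real mm)\<^sup>2 / 20)) = exp (real mm * ln K - t\<^sup>2 * (real mm)\<^sup>2 / 20)"
        unfolding Kmm by (simp flip: exp_add)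
      then show ?thesis by (simp add: mult_ac)
    qed
    also have "\<dots> \<le> (c1 * t\<^sup>2 * K\<^sup>2) * (1/4)^k * exp (5 * (ln K)\<^sup>2 / t\<^sup>2)"
      using quad c1 by (intro mult_left_mono) auto
    also have "\<dots> \<le> 1 / (4 * K ^ 4)"
    proof -
      have e: "4 * c1 * t\<^sup>2 * K ^ 6 * exp (5 * (ln K)\<^sup>2 / t\<^sup>2) \<le> 4 ^ k" using E4 by (simp add: K_def)
      have K6: "K ^ 6 = K\<^sup>2 * K ^ 4" by (subst power_add[symmetric]) simp
      have "((c1 * t\<^sup>2 * K\<^sup>2) * (1/4)^k * exp (5 * (ln K)\<^sup>2 / t\<^sup>2)) * (4 * K^4) = (4 * c1 * t\<^sup>2 * K ^ 6 * exp (5 * (ln K)\<^sup>2 / t\<^sup>2)) * (1/4)^k"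
        unfolding K6 by (simp add: mult_ac)
      also have "\<dots> \<le> 4 ^ k * (1/4)^k"
        using e by (intro mult_right_mono) auto
      also have "\<dots> = 1" by (simp flip: power_mult_distrib)
      finally show ?thesis using K1 by (intro div_helper) auto
    qed
    finally have "(Br * Bc) * (c1 * t\<^sup>2 * K\<^sup>2) * (1/4)^s * exp (- Phi) \<le> 1 / (4 * real k ^ 4)" unfolding goal_eq .
    then show ?thesis using main[unfolded m_def K_def] unfolding K_def by linarith
  qed
qed

definition KS :: "nat \<Rightarrow> nat \<Rightarrow> nat set set" where
  "KS n k = {R. R \<subseteq> {..<n} \<and> card R = k}"
definition US :: "nat \<Rightarrow> nat \<Rightarrow> (nat set \<times> nat set) set" where
  "US n k = KS n k \<times> KS n k"
definition blk :: "nat set \<times> nat set \<Rightarrow> (nat \<times> nat) set" where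
  "blk u = fst u \<times> snd u"
definition Ssum :: "nat set \<times> nat set \<Rightarrow> (nat \<times> nat \<Rightarrow> real) \<Rightarrow> real" where
  "Ssum u \<omega> = (\<Sum>e\<in>blk u. \<omega> e)"
definition Ev :: "nat \<Rightarrow> real \<Rightarrow> nat set \<times> nat set \<Rightarrow> (nat \<times> nat \<Rightarrow> real) set" where
  "Ev n y u = {\<omega>\<in>space (gauss_matrix n). y \<le> Ssum u \<omega>}"

lemma finite_KS: "finite (KS n k)"
  unfolding KS_def by (rule finite_subset[of _ "Pow {..<n}"]) auto

lemma finite_US: "finite (US n k)"
  unfolding US_def using finite_KS by simp

lemma card_KS: "card (KS n k) = n choose k"
  unfolding KS_def using n_subsets[of "{..<n}" k] by simp

lemma KS_empty: assumes "n < k" shows "KS n k = {}"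
proof -
  have "card R \<noteq> k" if "R \<subseteq> {..<n}" for R
  proof -
    have "card R \<le> n" using card_mono[OF finite_lessThan that] by simp
    then show ?thesis using assms by simp
  qed
  then show ?thesis unfolding KS_def by blast
qed

lemma blk_sub: "u \<in> US n k \<Longrightarrow> blk u \<subseteq> {..<n}\<times>{..<n}"
  by (auto simp: US_def KS_def blk_def)

lemma card_blk: "u \<in> US n k \<Longrightarrow> card (blk u) = k * k"
  by (auto simp: US_def KS_def blk_def card_cartesian_product)

lemma Ssum_meas: "u \<in> US n k \<Longrightarrow> Ssum u \<in> borel_measurable (gauss_matrix n)"
  unfolding Ssum_def
  by (rule borel_measurable_sum) (use blk_sub coord_meas in blast)

lemma Ev_sets: "u \<in> US n k \<Longrightarrow> Ev n y u \<in> sets (gauss_matrix n)"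
  unfolding Ev_def using Ssum_meas[of u n k] by measurable

lemma sub_avg_eq:
  assumes "(R, C) \<in> US n k" "k \<ge> 1"
  shows "(\<tau> \<le> sub_avg W R C) \<longleftrightarrow> \<tau> * (real k)\<^sup>2 \<le> Ssum (R, C) W"
proof -
  have cR: "card R = k" and cC: "card C = k" using assms by (auto simp: US_def KS_def)
  have "(\<Sum>i\<in>R. \<Sum>j\<in>C. W (i, j)) = Ssum (R, C) W"
    unfolding Ssum_def blk_def by (simp add: sum.cartesian_product)
  moreover have "(real k)\<^sup>2 > 0" using assms by simp
  ultimately show ?thesis unfolding sub_avg_def cR cC
    by (simp add: le_divide_eq power2_eq_square)
qed

lemma Gamma_eq:
  assumes "k \<ge> 1" "W \<in> space (gauss_matrix n)"
  shows "real (Defs.Gamma k \<tau> n W) = (\<Sum>u\<in>US n k. indicator (Ev n (\<tau> * (real k)\<^sup>2) u) W)"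
proof -
  have "{(R, C). R \<subseteq> {..<n} \<and> card R = k \<and> C \<subseteq> {..<n} \<and> card C = k \<and> \<tau> \<le> sub_avg W R C}
        = {u \<in> US n k. W \<in> Ev n (\<tau> * (real k)\<^sup>2) u}"
  proof (intro set_eqI iffI)
    fix x assume "x \<in> {(R, C). R \<subseteq> {..<n} \<and> card R = k \<and> C \<subseteq> {..<n} \<and> card C = k \<and> \<tau> \<le> sub_avg W R C}"
    then obtain R C where x: "x = (R, C)" "R \<subseteq> {..<n}" "card R = k" "C \<subseteq> {..<n}" "card C = k" "\<tau> \<le> sub_avg W R C"
      by blast
    then have u: "(R, C) \<in> US n k" by (simp add: US_def KS_def)
    show "x \<in> {u \<in> US n k. W \<in> Ev n (\<tau> * (real k)\<^sup>2) u}"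
      using x u sub_avg_eq[OF u assms(1), of \<tau> W] assms(2) by (simp add: Ev_def)
  next
    fix x assume "x \<in> {u \<in> US n k. W \<in> Ev n (\<tau> * (real k)\<^sup>2) u}"
    then obtain R C where x: "x = (R, C)" "(R, C) \<in> US n k" "W \<in> Ev n (\<tau> * (real k)\<^sup>2) (R, C)"
      by (cases x) auto
    then show "x \<in> {(R, C). R \<subseteq> {..<n} \<and> card R = k \<and> C \<subseteq> {..<n} \<and> card C = k \<and> \<tau> \<le> sub_avg W R C}"
      using sub_avg_eq[OF x(2) assms(1), of \<tau> W] by (simp add: Ev_def US_def KS_def)
  qed
  then have "Defs.Gamma k \<tau> n W = card {u \<in> US n k. W \<in> Ev n (\<tau> * (real k)\<^sup>2) u}"
    unfolding Gamma_def by simp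
  also have "real \<dots> = (\<Sum>u\<in>US n k. indicator (Ev n (\<tau> * (real k)\<^sup>2) u) W)"
  proof -
    have "(\<Sum>u\<in>US n k. indicator (Ev n (\<tau> * (real k)\<^sup>2) u) W) = (\<Sum>u\<in>{u \<in> US n k. W \<in> Ev n (\<tau> * (real k)\<^sup>2) u}. (1::real))"
      using finite_US[of n k] by (simp add: indicator_def sum.If_cases Int_def)
    then show ?thesis by simp
  qed
  finally show ?thesis .
qed

lemma Ev_sub: "Ev n y u \<subseteq> space (gauss_matrix n)"
  by (auto simp: Ev_def)

lemma integrable_ind: "u \<in> US n k \<Longrightarrow> integrable (gauss_matrix n) (indicator (Ev n y u) :: _ \<Rightarrow> real)"
proof -
  assume u: "u \<in> US n k"
  interpret prob_space "gauss_matrix n" by (rule gm_prob)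
  show ?thesis by (rule integrable_real_indicator[OF Ev_sets[OF u]]) (simp add: less_top[symmetric])
qed

lemma E_formula:
  assumes "k \<ge> 1"
  shows "E_Gamma k \<tau> n = (\<Sum>u\<in>US n k. measure (gauss_matrix n) (Ev n (\<tau> * (real k)\<^sup>2) u))"
proof -
  let ?y = "\<tau> * (real k)\<^sup>2"
  have "E_Gamma k \<tau> n = integral\<^sup>L (gauss_matrix n) (\<lambda>W. \<Sum>u\<in>US n k. indicator (Ev n ?y u) W)"
    unfolding E_Gamma_def by (rule Bochner_Integration.integral_cong) (simp_all add: Gamma_eq[OF assms])
  also have "\<dots> = (\<Sum>u\<in>US n k. integral\<^sup>L (gauss_matrix n) (indicator (Ev n ?y u)))"
    by (rule Bochner_Integration.integral_sum) (rule integrable_ind)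
  also have "\<dots> = (\<Sum>u\<in>US n k. measure (gauss_matrix n) (Ev n ?y u))"
    by (intro sum.cong refl) (simp add: Int_absorb2[OF Ev_sub])
  finally show ?thesis .
qed

lemma cov_formula:
  assumes "prob_space M" "A \<in> sets M" "B \<in> sets M"
  shows "integral\<^sup>L M (\<lambda>x. (indicator A x - measure M A) * (indicator B x - measure M B) :: real)
         = measure M (A \<inter> B) - measure M A * measure M B"
proof -
  interpret prob_space M by fact
  have ia: "integrable M (indicator A :: _ \<Rightarrow> real)" and ib: "integrable M (indicator B :: _ \<Rightarrow> real)"
    and iab: "integrable M (indicator (A \<inter> B) :: _ \<Rightarrow> real)"
    using assms by (auto intro!: integrable_real_indicator simp: less_top[symmetric])
  have eq: "(\<lambda>x. (indicator A x - measure M A) * (indicator B x - measure M B) :: real)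
      = (\<lambda>x. indicator (A \<inter> B) x - measure M B * indicator A x - measure M A * indicator B x + measure M A * measure M B)"
    by (auto simp: fun_eq_iff indicator_def algebra_simps)
  have AB: "A \<inter> B \<in> sets M" using assms by auto
  show ?thesis unfolding eq using ia ib iab assms AB
    by (simp add: Int_absorb2[OF sets.sets_into_space] prob_space)
qed

lemma Var_formula:
  assumes "k \<ge> 1"
  shows "Var_Gamma k \<tau> n = (\<Sum>u\<in>US n k. \<Sum>v\<in>US n k.
      measure (gauss_matrix n) (Ev n (\<tau> * (real k)\<^sup>2) u \<inter> Ev n (\<tau> * (real k)\<^sup>2) v)
      - measure (gauss_matrix n) (Ev n (\<tau> * (real k)\<^sup>2) u) * measure (gauss_matrix n) (Ev n (\<tau> * (real k)\<^sup>2) v))"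
proof -
  let ?y = "\<tau> * (real k)\<^sup>2"
  let ?M = "gauss_matrix n"
  let ?P = "\<lambda>u. measure ?M (Ev n ?y u)"
  let ?f = "\<lambda>u W. (indicator (Ev n ?y u) W - ?P u) :: real"
  have pt: "(real (Defs.Gamma k \<tau> n W) - E_Gamma k \<tau> n)\<^sup>2 = (\<Sum>u\<in>US n k. \<Sum>v\<in>US n k. ?f u W * ?f v W)"
    if "W \<in> space ?M" for W
  proof -
    have "real (Defs.Gamma k \<tau> n W) - E_Gamma k \<tau> n = (\<Sum>u\<in>US n k. ?f u W)"
      unfolding Gamma_eq[OF assms that] E_formula[OF assms] by (simp add: sum_subtractf)
    then show ?thesis by (simp add: power2_eq_square sum_product)
  qed
  have intg: "integrable ?M (\<lambda>W. ?f u W * ?f v W)" if "u \<in> US n k" "v \<in> US n k" for u v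
  proof -
    interpret prob_space ?M by (rule gm_prob)
    have "integrable ?M (\<lambda>W. indicator (Ev n ?y u \<inter> Ev n ?y v) W - ?P v * indicator (Ev n ?y u) W
          - ?P u * indicator (Ev n ?y v) W + ?P u * ?P v)"
      using integrable_ind[OF that(1)] integrable_ind[OF that(2)] Ev_sets[OF that(1)] Ev_sets[OF that(2)]
      by (intro Bochner_Integration.integrable_add Bochner_Integration.integrable_diff Bochner_Integration.integrable_mult_right integrable_real_indicator integrable_const)
         (auto simp: less_top[symmetric])
    moreover have "(\<lambda>W. indicator (Ev n ?y u \<inter> Ev n ?y v) W - ?P v * indicator (Ev n ?y u) W
          - ?P u * indicator (Ev n ?y v) W + ?P u * ?P v) = (\<lambda>W. ?f u W * ?f v W)"
      by (auto simp: fun_eq_iff indicator_def algebra_simps)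
    ultimately show ?thesis by simp
  qed
  have "Var_Gamma k \<tau> n = integral\<^sup>L ?M (\<lambda>W. \<Sum>u\<in>US n k. \<Sum>v\<in>US n k. ?f u W * ?f v W)"
    unfolding Var_Gamma_def by (rule Bochner_Integration.integral_cong) (simp_all add: pt)
  also have "\<dots> = (\<Sum>u\<in>US n k. \<Sum>v\<in>US n k. integral\<^sup>L ?M (\<lambda>W. ?f u W * ?f v W))"
    using intg by (simp add: Bochner_Integration.integral_sum Bochner_Integration.integrable_sum)
  also have "\<dots> = (\<Sum>u\<in>US n k. \<Sum>v\<in>US n k. measure ?M (Ev n ?y u \<inter> Ev n ?y v) - ?P u * ?P v)"
    by (intro sum.cong refl cov_formula gm_prob Ev_sets) auto
  finally show ?thesis .
qed

lemma Ev_eq: "Ev n y u = {\<omega>\<in>space (gauss_matrix n). y \<le> (\<Sum>e\<in>blk u. \<omega> e)}"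
  by (simp add: Ev_def Ssum_def)

lemma blk_ne: "u \<in> US n k \<Longrightarrow> k \<ge> 1 \<Longrightarrow> blk u \<noteq> {}"
  using card_blk[of u n k] by (metis card.empty mult_is_0 not_one_le_zero)

lemma P_lower:
  assumes u: "u \<in> US n k" and k: "k \<ge> 1" and t: "\<tau> > 0" and n: "n > 0"
  shows "measure (gauss_matrix n) (Ev n (\<tau> * (real k)\<^sup>2) u) \<ge> (1/\<tau>) * normal_density 0 (real k) (\<tau> * (real k)\<^sup>2 + 1/\<tau>)"
proof -
  have D: "distributed (gauss_matrix n) lborel (\<lambda>\<omega>. \<Sum>e\<in>blk u. \<omega> e) (normal_density 0 (sqrt (real (card (blk u)))))"
    by (rule sum_distr[OF n blk_sub[OF u] blk_ne[OF u k]])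
  have s: "sqrt (real (card (blk u))) = real k" using card_blk[OF u] by simp
  show ?thesis unfolding Ev_eq
    using normal_lower_tail[OF gm_prob D[unfolded s], of "\<tau> * (real k)\<^sup>2" "1/\<tau>"] k t by simp
qed

lemma P_lower2:
  assumes t: "\<tau> > 0" and k: "k \<ge> 1" and tk: "\<tau> * real k \<ge> 1"
  shows "(1/\<tau>) * normal_density 0 (real k) (\<tau> * (real k)\<^sup>2 + 1/\<tau>)
     \<ge> exp (- (\<tau>\<^sup>2 * (real k)\<^sup>2 / 2)) / (\<tau> * real k * sqrt (2 * pi) * exp (3/2))"
proof -
  define K where "K = real k"
  have K: "K \<ge> 1" using k by (simp add: K_def)
  have tK: "\<tau> * K \<ge> 1" using tk by (simp add: K_def)
  have sq: "sqrt (2 * pi * K\<^sup>2) = K * sqrt (2 * pi)" using K by (simp add: real_sqrt_mult)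
  have ex: "(\<tau> * K\<^sup>2 + 1/\<tau>)\<^sup>2 / (2 * K\<^sup>2) \<le> \<tau>\<^sup>2 * K\<^sup>2 / 2 + 3/2"
  proof -
    have "(\<tau> * K\<^sup>2 + 1/\<tau>)\<^sup>2 / (2 * K\<^sup>2) = \<tau>\<^sup>2 * K\<^sup>2 / 2 + 1 + 1 / (2 * (\<tau> * K)\<^sup>2)"
      using t K by (simp add: field_simps power2_eq_square)
    moreover have "1 / (2 * (\<tau> * K)\<^sup>2) \<le> 1/2"
    proof -
      have "(\<tau> * K)\<^sup>2 \<ge> 1" using tK by (simp add: one_le_power)
      then show ?thesis by (simp add: field_simps)
    qed
    ultimately show ?thesis by linarith
  qed
  have "exp (- (\<tau>\<^sup>2 * K\<^sup>2 / 2)) / (\<tau> * K * sqrt (2 * pi) * exp (3/2))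
      = (1/\<tau>) * (1 / (K * sqrt (2 * pi))) * (exp (- (\<tau>\<^sup>2 * K\<^sup>2 / 2)) * exp (- (3/2)))"
    using t K by (simp add: exp_minus field_simps)
  also have "\<dots> = (1/\<tau>) * (1 / (K * sqrt (2 * pi))) * exp (- (\<tau>\<^sup>2 * K\<^sup>2 / 2 + 3/2))"
    by (simp add: mult_exp_exp)
  also have "\<dots> \<le> (1/\<tau>) * (1 / (K * sqrt (2 * pi))) * exp (- ((\<tau> * K\<^sup>2 + 1/\<tau>)\<^sup>2 / (2 * K\<^sup>2)))"
    using ex t K by (intro mult_left_mono) auto
  also have "\<dots> = (1/\<tau>) * normal_density 0 K (\<tau> * K\<^sup>2 + 1/\<tau>)"
    unfolding normal_density_def sq by simp
  finally show ?thesis by (simp add: K_def)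
qed

lemma Ev_inter: "Ev n y u \<inter> Ev n y v = {\<omega>\<in>space (gauss_matrix n). y \<le> (\<Sum>e\<in>blk u. \<omega> e) \<and> y \<le> (\<Sum>e\<in>blk v. \<omega> e)}"
  by (auto simp: Ev_eq)

lemma card_blk_inter: "u \<in> US n k \<Longrightarrow> v \<in> US n k \<Longrightarrow>
   card (blk u \<inter> blk v) = card (fst u \<inter> fst v) * card (snd u \<inter> snd v)"
  by (simp add: blk_def Times_Int_Times card_cartesian_product)

definition gfun :: "real \<Rightarrow> nat \<Rightarrow> nat \<Rightarrow> nat \<Rightarrow> real" where
  "gfun \<tau> k r c = (if r = 0 \<or> c = 0 then 0 else exp (- (\<tau>\<^sup>2 * real k ^ 4) / ((real k)\<^sup>2 + real r * real c)))"

lemma gfun_nonneg: "gfun \<tau> k r c \<ge> 0" by (simp add: gfun_def)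

lemma term_bound:
  assumes u: "u \<in> US n k" and v: "v \<in> US n k" and k: "k \<ge> 1" and t: "\<tau> > 0" and n: "n > 0"
  shows "measure (gauss_matrix n) (Ev n (\<tau> * (real k)\<^sup>2) u \<inter> Ev n (\<tau> * (real k)\<^sup>2) v)
      - measure (gauss_matrix n) (Ev n (\<tau> * (real k)\<^sup>2) u) * measure (gauss_matrix n) (Ev n (\<tau> * (real k)\<^sup>2) v)
      \<le> gfun \<tau> k (card (fst u \<inter> fst v)) (card (snd u \<inter> snd v))"
proof -
  let ?y = "\<tau> * (real k)\<^sup>2"
  let ?M = "gauss_matrix n"
  have fin: "finite (blk u \<inter> blk v)" using blk_sub[OF u] finite_subset by blast
  show ?thesis
  proof (cases "blk u \<inter> blk v = {}")
    case True
    have "measure ?M (Ev n ?y u \<inter> Ev n ?y v) = measure ?M (Ev n ?y u) * measure ?M (Ev n ?y v)"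
      unfolding Ev_inter using pair_indep[OF n blk_sub[OF u] blk_sub[OF v] True] by (simp add: Ev_eq)
    then show ?thesis by (simp add: gfun_nonneg)
  next
    case False
    then have cne: "card (blk u \<inter> blk v) \<noteq> 0" using fin by simp
    then have nz: "card (fst u \<inter> fst v) \<noteq> 0" "card (snd u \<inter> snd v) \<noteq> 0"
      using card_blk_inter[OF u v] by auto
    have "measure ?M (Ev n ?y u \<inter> Ev n ?y v) \<le> exp (- ((2*?y)\<^sup>2) / (2 * (card (blk u) + card (blk v) + 2 * card (blk u \<inter> blk v))))"
      unfolding Ev_inter using t by (intro pair_upper[OF n blk_sub[OF u] blk_sub[OF v] blk_ne[OF u k]]) auto
    also have "\<dots> = gfun \<tau> k (card (fst u \<inter> fst v)) (card (snd u \<inter> snd v))"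
    proof -
      have "(2 * ?y)\<^sup>2 / (2 * real (card (blk u) + card (blk v) + 2 * card (blk u \<inter> blk v)))
          = \<tau>\<^sup>2 * real k ^ 4 / ((real k)\<^sup>2 + real (card (fst u \<inter> fst v)) * real (card (snd u \<inter> snd v)))"
      proof -
        define m where "m = real (card (fst u \<inter> fst v)) * real (card (snd u \<inter> snd v))"
        have m0: "m \<ge> 0" by (simp add: m_def)
        have p: "(real k)\<^sup>2 + m > 0" using k m0 by (smt (verit) one_le_power of_nat_1 of_nat_le_iff)
        have "(2 * ?y)\<^sup>2 / (2 * real (card (blk u) + card (blk v) + 2 * card (blk u \<inter> blk v)))
            = (4 * (\<tau>\<^sup>2 * real k ^ 4)) / (4 * ((real k)\<^sup>2 + m))"
          unfolding card_blk[OF u] card_blk[OF v] card_blk_inter[OF u v] m_def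
          by (simp add: power2_eq_square power4_eq_xxxx algebra_simps)
        also have "\<dots> = \<tau>\<^sup>2 * real k ^ 4 / ((real k)\<^sup>2 + m)"
          by (rule mult_divide_mult_cancel_left) simp
        finally show ?thesis unfolding m_def .
      qed
      then show ?thesis using nz by (simp add: gfun_def)
    qed
    finally show ?thesis
      using measure_nonneg[of ?M "Ev n ?y u"] measure_nonneg[of ?M "Ev n ?y v"]
      by (smt (verit) mult_nonneg_nonneg)
  qed
qed

lemma group_sum:
  fixes \<phi> :: "'b \<Rightarrow> real"
  assumes "finite A" "finite T" "h ` A \<subseteq> T"
  shows "(\<Sum>x\<in>A. \<phi> (h x)) = (\<Sum>t\<in>T. real (card {x\<in>A. h x = t}) * \<phi> t)"
proof -
  have "(\<Sum>x\<in>A. \<phi> (h x)) = (\<Sum>t\<in>T. \<Sum>x\<in>{x. x \<in> A \<and> h x = t}. \<phi> (h x))"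
    by (rule sum.group[OF assms, symmetric])
  also have "\<dots> = (\<Sum>t\<in>T. real (card {x\<in>A. h x = t}) * \<phi> t)"
  proof (rule sum.cong[OF refl])
    fix t
    have "(\<Sum>x\<in>{x. x \<in> A \<and> h x = t}. \<phi> (h x)) = (\<Sum>x\<in>{x. x \<in> A \<and> h x = t}. \<phi> t)"
      by (rule sum.cong) auto
    then show "(\<Sum>x\<in>{x. x \<in> A \<and> h x = t}. \<phi> (h x)) = real (card {x\<in>A. h x = t}) * \<phi> t"
      by simp
  qed
  finally show ?thesis .
qed

lemma count_bound:
  assumes R: "R \<in> KS n k"
  shows "card {R'\<in>KS n k. card (R \<inter> R') = r} \<le> (k choose r) * ((n - k) choose (k - r))"
proof -
  have Rs: "R \<subseteq> {..<n}" and cR: "card R = k" using R by (auto simp: KS_def)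
  have fR: "finite R" using Rs finite_subset by blast
  let ?A = "{R'\<in>KS n k. card (R \<inter> R') = r}"
  let ?B = "{X. X \<subseteq> R \<and> card X = r} \<times> {Y. Y \<subseteq> {..<n} - R \<and> card Y = k - r}"
  define f where "f R' = (R \<inter> R', R' - R)" for R'
  have inj: "inj_on f ?A"
  proof (rule inj_onI)
    fix X Y assume "f X = f Y" "X \<in> ?A" "Y \<in> ?A"
    then have "R \<inter> X = R \<inter> Y" "X - R = Y - R" by (auto simp: f_def)
    then show "X = Y" by blast
  qed
  have img: "f ` ?A \<subseteq> ?B"
  proof
    fix z assume "z \<in> f ` ?A"
    then obtain X where X: "X \<in> ?A" "z = f X" by blast
    then have Xs: "X \<subseteq> {..<n}" "card X = k" "card (R \<inter> X) = r" by (auto simp: KS_def)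
    have fX: "finite X" using Xs finite_subset by blast
    have "card (X - R) = card X - card (X \<inter> R)" using fX by (simp add: card_Diff_subset_Int)
    then have "card (X - R) = k - r" using Xs by (simp add: Int_commute)
    then show "z \<in> ?B" using X Xs by (auto simp: f_def)
  qed
  have finB: "finite ?B" using fR by (auto intro: finite_subset[of _ "Pow {..<n}"])
  have "card ?A \<le> card ?B" by (rule card_inj_on_le[OF inj img finB])
  also have "card ?B = (k choose r) * ((n - k) choose (k - r))"
  proof -
    have "card {X. X \<subseteq> R \<and> card X = r} = k choose r" using n_subsets[OF fR, of r] cR by simp
    moreover have "card {Y. Y \<subseteq> {..<n} - R \<and> card Y = k - r} = (n - k) choose (k - r)"
      using n_subsets[of "{..<n} - R" "k - r"] card_Diff_subset[OF fR Rs] cR by simp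
    ultimately show ?thesis by (simp add: card_cartesian_product)
  qed
  finally show ?thesis .
qed

lemma card_int_le: "R \<in> KS n k \<Longrightarrow> card (R \<inter> R') \<le> k"
  unfolding KS_def using card_mono[of R "R \<inter> R'"] finite_subset[of R "{..<n}"] by auto

lemma inner_sum_bound:
  fixes g :: "nat \<Rightarrow> nat \<Rightarrow> real"
  assumes u: "u \<in> US n k" and g0: "\<And>r c. g r c \<ge> 0"
  shows "(\<Sum>v\<in>US n k. g (card (fst u \<inter> fst v)) (card (snd u \<inter> snd v)))
    \<le> (\<Sum>r\<in>{..k}. \<Sum>c\<in>{..k}. real ((k choose r) * ((n - k) choose (k - r))) * real ((k choose c) * ((n - k) choose (k - c))) * g r c)"
proof -
  obtain R C where uRC: "u = (R, C)" and R: "R \<in> KS n k" and C: "C \<in> KS n k"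
    using u by (auto simp: US_def)
  let ?a = "\<lambda>r. real ((k choose r) * ((n - k) choose (k - r)))"
  let ?cR = "\<lambda>r. real (card {R'\<in>KS n k. card (R \<inter> R') = r})"
  let ?cC = "\<lambda>c. real (card {C'\<in>KS n k. card (C \<inter> C') = c})"
  have fK: "finite (KS n k)" by (rule finite_KS)
  have imR: "(\<lambda>R'. card (R \<inter> R')) ` KS n k \<subseteq> {..k}" using card_int_le[OF R] by auto
  have imC: "(\<lambda>C'. card (C \<inter> C')) ` KS n k \<subseteq> {..k}" using card_int_le[OF C] by auto
  have "(\<Sum>v\<in>US n k. g (card (fst u \<inter> fst v)) (card (snd u \<inter> snd v)))
      = (\<Sum>R'\<in>KS n k. \<Sum>C'\<in>KS n k. g (card (R \<inter> R')) (card (C \<inter> C')))"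
    unfolding US_def uRC by (simp add: sum.cartesian_product split_beta)
  also have "\<dots> = (\<Sum>R'\<in>KS n k. \<Sum>c\<in>{..k}. ?cC c * g (card (R \<inter> R')) c)"
    by (intro sum.cong refl group_sum[OF fK _ imC]) simp
  also have "\<dots> = (\<Sum>c\<in>{..k}. ?cC c * (\<Sum>R'\<in>KS n k. g (card (R \<inter> R')) c))"
  proof -
    have "(\<Sum>R'\<in>KS n k. \<Sum>c\<in>{..k}. ?cC c * g (card (R \<inter> R')) c) = (\<Sum>c\<in>{..k}. \<Sum>R'\<in>KS n k. ?cC c * g (card (R \<inter> R')) c)"
      by (rule sum.swap)
    then show ?thesis by (simp add: sum_distrib_left)
  qed
  also have "\<dots> = (\<Sum>c\<in>{..k}. ?cC c * (\<Sum>r\<in>{..k}. ?cR r * g r c))"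
    by (intro sum.cong refl arg_cong[where f="\<lambda>x. _ * x"] group_sum[OF fK _ imR]) simp
  also have "\<dots> \<le> (\<Sum>c\<in>{..k}. ?a c * (\<Sum>r\<in>{..k}. ?a r * g r c))"
  proof (rule sum_mono)
    fix c assume "c \<in> {..k}"
    have h1: "?cC c \<le> ?a c" using count_bound[OF C, of c] by (simp only: of_nat_le_iff)
    have h2: "(\<Sum>r\<in>{..k}. ?cR r * g r c) \<le> (\<Sum>r\<in>{..k}. ?a r * g r c)"
    proof (rule sum_mono)
      fix r assume "r \<in> {..k}"
      have "?cR r \<le> ?a r" using count_bound[OF R, of r] by (simp only: of_nat_le_iff)
      then show "?cR r * g r c \<le> ?a r * g r c" using g0[of r c] by (rule mult_right_mono)
    qed
    have h3: "0 \<le> (\<Sum>r\<in>{..k}. ?cR r * g r c)" using g0 by (intro sum_nonneg) simp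
    show "?cC c * (\<Sum>r\<in>{..k}. ?cR r * g r c) \<le> ?a c * (\<Sum>r\<in>{..k}. ?a r * g r c)"
      by (rule mult_mono[OF h1 h2]) (simp_all add: h3)
  qed
  also have "\<dots> = (\<Sum>r\<in>{..k}. \<Sum>c\<in>{..k}. ?a r * ?a c * g r c)"
  proof -
    have "(\<Sum>c\<in>{..k}. ?a c * (\<Sum>r\<in>{..k}. ?a r * g r c)) = (\<Sum>c\<in>{..k}. \<Sum>r\<in>{..k}. ?a r * ?a c * g r c)"
      by (simp add: sum_distrib_left mult_ac)
    also have "\<dots> = (\<Sum>r\<in>{..k}. \<Sum>c\<in>{..k}. ?a r * ?a c * g r c)"
      by (rule sum.swap)
    finally show ?thesis .
  qed
  finally show ?thesis .
qed

lemma derive_n: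
  fixes \<tau> :: real and k n :: nat
  assumes t: "\<tau> > 0" and k2: "2 \<le> k" and kn: "k \<le> n"
    and C0: "1 + 4 / \<tau>\<^sup>2 * \<bar>ln (4 / \<tau>\<^sup>2 * ln 2)\<bar> < real k"
    and hyp: "real k \<le> 4 / \<tau>\<^sup>2 * ln (real n) - 4 / \<tau>\<^sup>2 * ln (4 / \<tau>\<^sup>2 * ln (real n)) - 12 * ln 2 / \<tau>\<^sup>2"
  shows "8 * real k * exp (\<tau>\<^sup>2 * real k / 4) \<le> real n"
proof -
  define a where "a = 4 / \<tau>\<^sup>2"
  define L where "L = ln (real n)"
  have a0: "a > 0" using t by (simp add: a_def)
  have n2: "real n \<ge> 2" using k2 kn by simp
  have L2: "L \<ge> ln 2" using n2 by (simp add: L_def)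
  have ln2: "ln (2::real) > 0" by simp
  define x where "x = a * L"
  have L0: "L > 0" using L2 ln2 by linarith
  have xpos: "x > 0" using a0 L0 by (simp add: x_def)
  have eq12: "12 * ln 2 / \<tau>\<^sup>2 = 3 * a * ln 2" by (simp add: a_def)
  have h: "real k \<le> x - a * ln x - 3 * a * ln 2"
    using hyp unfolding eq12 a_def[symmetric] L_def[symmetric] x_def[symmetric] .
  show ?thesis
  proof (cases "x < 1")
    case True
    have "a * ln 2 \<le> x" using L2 a0 by (simp add: x_def)
    moreover have "a * ln 2 > 0" using a0 ln2 by simp
    ultimately have "ln (a * ln 2) \<le> ln x" by simp
    then have "- ln x \<le> \<bar>ln (a * ln 2)\<bar>" by linarith
    then have "a * (- ln x) \<le> a * \<bar>ln (a * ln 2)\<bar>" using a0 by (intro mult_left_mono) auto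
    moreover have "3 * a * ln 2 \<ge> 0" using a0 ln2 by simp
    ultimately have "real k < 1 + a * \<bar>ln (a * ln 2)\<bar>" using h True by simp
    then show ?thesis using C0 by (simp add: a_def)
  next
    case False
    then have lx: "ln x \<ge> 0" by simp
    have "a * ln x \<ge> 0" "3 * a * ln 2 \<ge> 0" using a0 lx ln2 by auto
    then have kx: "real k \<le> x" using h by linarith
    have kpos: "real k > 0" using k2 by simp
    then have "ln (real k) \<le> ln x" using kx by simp
    then have "a * ln (real k) \<le> a * ln x" using a0 by (intro mult_left_mono) auto
    then have h2: "real k \<le> a * (L - ln (real k) - 3 * ln 2)" using h by (simp add: x_def algebra_simps)
    have "real k / a \<le> L - ln (real k) - 3 * ln 2"
      using h2 a0 by (simp add: pos_divide_le_eq mult.commute)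
    then have "real k / a + ln (real k) + 3 * ln 2 \<le> L" by linarith
    then have "exp (real k / a + ln (real k) + 3 * ln 2) \<le> exp L" by simp
    moreover have "exp (real k / a + ln (real k) + 3 * ln 2) = 8 * real k * exp (\<tau>\<^sup>2 * real k / 4)"
    proof -
      have e8: "exp (3 * ln (2::real)) = 8"
      proof -
        have "exp (real 3 * ln (2::real)) = exp (ln 2) ^ 3" by (rule exp_of_nat_mult)
        then show ?thesis by simp
      qed
      have ka: "real k / a = \<tau>\<^sup>2 * real k / 4" by (simp add: a_def)
      show ?thesis unfolding exp_add ka e8 using kpos by simp
    qed
    moreover have "exp L = real n" using n2 by (simp add: L_def)
    ultimately show ?thesis by simp
  qed
qed

lemma eventual_facts:
  fixes \<tau> :: real assumes t: "\<tau> > 0"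
  shows "eventually (\<lambda>k::nat. 2 \<le> k \<and> 1 \<le> \<tau> * real k
     \<and> 4 * (2 * pi * exp 3) * \<tau>\<^sup>2 * real k ^ 8 \<le> exp (\<tau>\<^sup>2 * real k / 10)
     \<and> real k \<le> exp (\<tau>\<^sup>2 * real k / 20)
     \<and> 4 * (2 * pi * exp 3) * \<tau>\<^sup>2 * real k ^ 6 * exp (5 * (ln (real k))\<^sup>2 / \<tau>\<^sup>2) \<le> 4 ^ k
     \<and> 1 + 4 / \<tau>\<^sup>2 * \<bar>ln (4 / \<tau>\<^sup>2 * ln 2)\<bar> < real k) sequentially"
proof -
  have e1: "eventually (\<lambda>k::nat. 2 \<le> k) sequentially" by (rule eventually_ge_at_top)
  have e2: "eventually (\<lambda>k::nat. 1 \<le> \<tau> * real k) sequentially" using t by real_asymp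
  have e3: "eventually (\<lambda>k::nat. 4 * (2 * pi * exp 3) * \<tau>\<^sup>2 * real k ^ 8 \<le> exp (\<tau>\<^sup>2 * real k / 10)) sequentially"
    using t by real_asymp
  have e4: "eventually (\<lambda>k::nat. real k \<le> exp (\<tau>\<^sup>2 * real k / 20)) sequentially" using t by real_asymp
  have e5: "eventually (\<lambda>k::nat. 4 * (2 * pi * exp 3) * \<tau>\<^sup>2 * real k ^ 6 * exp (5 * (ln (real k))\<^sup>2 / \<tau>\<^sup>2) \<le> 4 ^ k) sequentially"
    using t by real_asymp
  have e6: "eventually (\<lambda>k::nat. 1 + 4 / \<tau>\<^sup>2 * \<bar>ln (4 / \<tau>\<^sup>2 * ln 2)\<bar> < real k) sequentially"
    by real_asymp
  show ?thesis using e1 e2 e3 e4 e5 e6 by eventually_elim auto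
qed

lemma term_core:
  fixes \<tau> :: real and k n r c :: nat
  assumes t: "\<tau> > 0" and k2: "2 \<le> k" and rk: "r \<le> k" and ck: "c \<le> k"
    and E2: "4 * (2 * pi * exp 3) * \<tau>\<^sup>2 * real k ^ 8 \<le> exp (\<tau>\<^sup>2 * real k / 10)"
    and E3: "real k \<le> exp (\<tau>\<^sup>2 * real k / 20)"
    and E4: "4 * (2 * pi * exp 3) * \<tau>\<^sup>2 * real k ^ 6 * exp (5 * (ln (real k))\<^sup>2 / \<tau>\<^sup>2) \<le> 4 ^ k"
    and nbig: "8 * real k * exp (\<tau>\<^sup>2 * real k / 4) \<le> real n"
  shows "real ((k choose r) * ((n - k) choose (k - r))) / real (n choose k)
       * (real ((k choose c) * ((n - k) choose (k - c))) / real (n choose k))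
       * gfun \<tau> k r c * ((2 * pi * exp 3) * \<tau>\<^sup>2 * (real k)\<^sup>2 * exp (\<tau>\<^sup>2 * (real k)\<^sup>2))
       \<le> 1 / (4 * real k ^ 4)"
proof (cases "r = 0 \<or> c = 0")
  case True then show ?thesis by (auto simp: gfun_def)
next
  case False
  then have r1: "1 \<le> r" and c1: "1 \<le> c" by auto
  define q where "q = real k / real (n - k)"
  define l where "l = \<tau>\<^sup>2 * real k / 4"
  have k1: "k \<ge> 1" using k2 by simp
  have el: "exp l \<ge> 1" using t by (simp add: l_def)
  have n2k: "2 * k \<le> n"
  proof -
    have "8 * real k * 1 \<le> 8 * real k * exp l" using el by (intro mult_left_mono) auto
    then have "8 * real k \<le> real n" using nbig by (simp add: l_def)
    then show ?thesis by simp
  qed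
  have nk: "real (n - k) \<ge> 4 * real k * exp l"
  proof -
    have "real k \<le> real k * exp l" using el by (simp add: mult_le_cancel_left1)
    then show ?thesis using nbig n2k by (simp add: of_nat_diff l_def)
  qed
  have q0: "q \<ge> 0" by (simp add: q_def)
  have qb: "q \<le> exp (- (\<tau>\<^sup>2 * real k / 4)) / 4"
  proof -
    have pos: "4 * real k * exp l > 0" using k1 by simp
    have "q \<le> real k / (4 * real k * exp l)" unfolding q_def
      using nk pos by (intro divide_left_mono) auto
    also have "\<dots> = exp (- l) / 4" using k1 by (simp add: exp_minus field_simps)
    finally show ?thesis by (simp add: l_def)
  qed
  have ar: "real ((k choose r) * ((n - k) choose (k - r))) / real (n choose k) \<le> real (k choose r) * q ^ r"
  proof -
    have "real ((k choose r) * ((n - k) choose (k - r))) / real (n choose k) = real (k choose r) * (real ((n - k) choose (k - r)) / real (n choose k))"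
      by simp
    also have "\<dots> \<le> real (k choose r) * q ^ r" unfolding q_def
      using choose_ratio_bound[OF rk n2k k1] by (intro mult_left_mono) auto
    finally show ?thesis .
  qed
  have ac: "real ((k choose c) * ((n - k) choose (k - c))) / real (n choose k) \<le> real (k choose c) * q ^ c"
  proof -
    have "real ((k choose c) * ((n - k) choose (k - c))) / real (n choose k) = real (k choose c) * (real ((n - k) choose (k - c)) / real (n choose k))"
      by simp
    also have "\<dots> \<le> real (k choose c) * q ^ c" unfolding q_def
      using choose_ratio_bound[OF ck n2k k1] by (intro mult_left_mono) auto
    finally show ?thesis .
  qed
  have Bpow: "real (k choose j) \<le> real k ^ j" "real (k choose j) \<le> real k ^ (k - j)" if "j \<le> k" for j
  proof -
    show "real (k choose j) \<le> real k ^ j"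
      using binomial_le_pow[OF that] by (simp flip: of_nat_power)
    have "k choose j = k choose (k - j)" by (rule binomial_symmetric[OF that])
    also have "\<dots> \<le> k ^ (k - j)" by (rule binomial_le_pow) simp
    finally show "real (k choose j) \<le> real k ^ (k - j)" by (simp flip: of_nat_power)
  qed
  have g: "gfun \<tau> k r c = exp (- (\<tau>\<^sup>2 * real k ^ 4) / ((real k)\<^sup>2 + real r * real c))"
    using False by (simp add: gfun_def)
  have C1: "(2 * pi * exp 3) * \<tau>\<^sup>2 * (real k)\<^sup>2 * exp (\<tau>\<^sup>2 * (real k)\<^sup>2) \<ge> 0" by simp
  have "real ((k choose r) * ((n - k) choose (k - r))) / real (n choose k)
       * (real ((k choose c) * ((n - k) choose (k - c))) / real (n choose k))
       * gfun \<tau> k r c * ((2 * pi * exp 3) * \<tau>\<^sup>2 * (real k)\<^sup>2 * exp (\<tau>\<^sup>2 * (real k)\<^sup>2))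
     \<le> (real (k choose r) * q ^ r) * (real (k choose c) * q ^ c)
       * exp (- (\<tau>\<^sup>2 * real k ^ 4) / ((real k)\<^sup>2 + real r * real c))
       * ((2 * pi * exp 3) * \<tau>\<^sup>2 * (real k)\<^sup>2 * exp (\<tau>\<^sup>2 * (real k)\<^sup>2))"
    unfolding g using ar ac C1 q0
    by (intro mult_right_mono mult_mono) (auto intro!: divide_nonneg_nonneg)
  also have "\<dots> \<le> 1 / (4 * real k ^ 4)"
    by (rule core_bound[OF t r1 rk c1 ck q0 qb _ Bpow[OF rk] _ Bpow[OF ck] _ E2 E3 E4]) auto
  finally show ?thesis .
qed

lemma main_bound:
  fixes \<tau> :: real and k n :: nat
  assumes t: "\<tau> > 0" and k2: "2 \<le> k" and kn: "k \<le> n" and tk: "1 \<le> \<tau> * real k"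
    and E2: "4 * (2 * pi * exp 3) * \<tau>\<^sup>2 * real k ^ 8 \<le> exp (\<tau>\<^sup>2 * real k / 10)"
    and E3: "real k \<le> exp (\<tau>\<^sup>2 * real k / 20)"
    and E4: "4 * (2 * pi * exp 3) * \<tau>\<^sup>2 * real k ^ 6 * exp (5 * (ln (real k))\<^sup>2 / \<tau>\<^sup>2) \<le> 4 ^ k"
    and nbig: "8 * real k * exp (\<tau>\<^sup>2 * real k / 4) \<le> real n"
  shows "Var_Gamma k \<tau> n / (E_Gamma k \<tau> n)\<^sup>2 \<le> 1 / (real k)\<^sup>2"
proof -
  let ?y = "\<tau> * (real k)\<^sup>2"
  let ?M = "gauss_matrix n"
  let ?P = "\<lambda>u. measure ?M (Ev n ?y u)"
  have k1: "k \<ge> 1" using k2 by simp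
  have n0: "n > 0" using k1 kn by simp
  define p1 where "p1 = exp (- (\<tau>\<^sup>2 * (real k)\<^sup>2 / 2)) / (\<tau> * real k * sqrt (2 * pi) * exp (3/2))"
  have p1pos: "p1 > 0" using t k1 by (simp add: p1_def)
  have Pl: "?P u \<ge> p1" if "u \<in> US n k" for u
    using P_lower[OF that k1 t n0] P_lower2[OF t k1 tk] by (simp add: p1_def)
  define N where "N = real (n choose k)"
  have N1: "N \<ge> 1" using kn by (simp add: N_def Suc_le_eq)
  have cardUS: "real (card (US n k)) = N * N" by (simp add: US_def card_cartesian_product card_KS N_def)
  have Eb: "E_Gamma k \<tau> n \<ge> N * N * p1"
  proof -
    have "(\<Sum>u\<in>US n k. p1) \<le> (\<Sum>u\<in>US n k. ?P u)" by (rule sum_mono) (rule Pl)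
    then show ?thesis unfolding E_formula[OF k1] using cardUS by simp
  qed
  define a where "a r = real ((k choose r) * ((n - k) choose (k - r)))" for r
  define X where "X = (\<Sum>r\<in>{..k}. \<Sum>c\<in>{..k}. a r * a c * gfun \<tau> k r c)"
  have X0: "X \<ge> 0" unfolding X_def a_def by (intro sum_nonneg mult_nonneg_nonneg gfun_nonneg) auto
  have Vb: "Var_Gamma k \<tau> n \<le> N * N * X"
  proof -
    have "Var_Gamma k \<tau> n \<le> (\<Sum>u\<in>US n k. \<Sum>v\<in>US n k. gfun \<tau> k (card (fst u \<inter> fst v)) (card (snd u \<inter> snd v)))"
      unfolding Var_formula[OF k1]
      by (intro sum_mono term_bound[OF _ _ k1 t n0])
    also have "\<dots> \<le> (\<Sum>u\<in>US n k. X)"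
      unfolding X_def a_def by (intro sum_mono inner_sum_bound gfun_nonneg)
    also have "\<dots> = N * N * X" using cardUS by simp
    finally show ?thesis .
  qed
  have E0: "E_Gamma k \<tau> n > 0" using Eb N1 p1pos
    by (smt (verit) mult_pos_pos)
  have "Var_Gamma k \<tau> n / (E_Gamma k \<tau> n)\<^sup>2 \<le> (N * N * X) / (E_Gamma k \<tau> n)\<^sup>2"
    using Vb by (intro divide_right_mono) auto
  also have "\<dots> \<le> (N * N * X) / (N * N * p1)\<^sup>2"
  proof (rule divide_left_mono)
    show "(N * N * p1)\<^sup>2 \<le> (E_Gamma k \<tau> n)\<^sup>2" using Eb N1 p1pos by (intro power_mono) auto
    show "0 \<le> N * N * X" using N1 X0 by simp
    show "0 < (E_Gamma k \<tau> n)\<^sup>2 * (N * N * p1)\<^sup>2" using E0 N1 p1pos by simp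
  qed
  also have "\<dots> = (\<Sum>r\<in>{..k}. \<Sum>c\<in>{..k}. a r / N * (a c / N) * gfun \<tau> k r c * (1 / p1\<^sup>2))"
    unfolding X_def using N1 p1pos
    by (simp add: sum_divide_distrib sum_distrib_right power2_eq_square field_simps)
  also have "\<dots> \<le> (\<Sum>r\<in>{..k}. \<Sum>c\<in>{..k}. 1 / (4 * real k ^ 4))"
  proof (intro sum_mono)
    fix r c assume r: "r \<in> {..k}" and c: "c \<in> {..k}"
    have ip: "1 / p1\<^sup>2 = (2 * pi * exp 3) * \<tau>\<^sup>2 * (real k)\<^sup>2 * exp (\<tau>\<^sup>2 * (real k)\<^sup>2)"
    proof -
      have "(exp (- (\<tau>\<^sup>2 * (real k)\<^sup>2 / 2)))\<^sup>2 = exp (- (\<tau>\<^sup>2 * (real k)\<^sup>2))"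
        by (simp add: power2_eq_square flip: exp_add)
      moreover have "(exp (3/2::real))\<^sup>2 = exp 3"
        by (simp add: power2_eq_square flip: exp_add)
      moreover have "(sqrt (2 * pi))\<^sup>2 = 2 * pi" by simp
      ultimately show ?thesis unfolding p1_def
        by (simp add: power_divide power_mult_distrib exp_minus field_simps)
    qed
    show "a r / N * (a c / N) * gfun \<tau> k r c * (1 / p1\<^sup>2) \<le> 1 / (4 * real k ^ 4)"
      unfolding ip a_def N_def using r c
      by (intro term_core[OF t k2 _ _ E2 E3 E4 nbig]) auto
  qed
  also have "\<dots> = real (Suc k) * real (Suc k) / (4 * real k ^ 4)" by simp
  also have "\<dots> \<le> 1 / (real k)\<^sup>2"
  proof -
    have K: "real k \<ge> 1" using k1 by simp
    have "real (Suc k) \<le> 2 * real k" using k1 by simp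
    then have "real (Suc k) * real (Suc k) \<le> (2 * real k) * (2 * real k)" by (intro mult_mono) auto
    then have "real (Suc k) * real (Suc k) \<le> 4 * (real k)\<^sup>2" by (simp add: power2_eq_square)
    then show ?thesis using K
      by (simp add: divide_simps power4_eq_xxxx power2_eq_square)
  qed
  finally show ?thesis .
qed

theorem lemma4:
  fixes \<tau> :: real
  assumes "\<tau> > 0"
  shows "\<exists>K::nat. \<forall>k\<ge>K. \<forall>n::nat. n \<ge> 1 \<longrightarrow>
           real k \<le> 4 / \<tau>\<^sup>2 * ln (real n) - 4 / \<tau>\<^sup>2 * ln (4 / \<tau>\<^sup>2 * ln (real n))
                      - 12 * ln 2 / \<tau>\<^sup>2 \<longrightarrow>
           Var_Gamma k \<tau> n / (E_Gamma k \<tau> n)\<^sup>2 \<le> 1 / (real k)\<^sup>2"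
proof -
  obtain K where K: "\<And>k. k \<ge> K \<Longrightarrow> 2 \<le> k \<and> 1 \<le> \<tau> * real k
     \<and> 4 * (2 * pi * exp 3) * \<tau>\<^sup>2 * real k ^ 8 \<le> exp (\<tau>\<^sup>2 * real k / 10)
     \<and> real k \<le> exp (\<tau>\<^sup>2 * real k / 20)
     \<and> 4 * (2 * pi * exp 3) * \<tau>\<^sup>2 * real k ^ 6 * exp (5 * (ln (real k))\<^sup>2 / \<tau>\<^sup>2) \<le> 4 ^ k
     \<and> 1 + 4 / \<tau>\<^sup>2 * \<bar>ln (4 / \<tau>\<^sup>2 * ln 2)\<bar> < real k"
    using eventual_facts[OF assms] unfolding eventually_sequentially by blast
  show ?thesis
  proof (intro exI[of _ K] allI impI)
    fix k n :: nat
    assume kK: "K \<le> k" and n1: "1 \<le> n"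
      and hyp: "real k \<le> 4 / \<tau>\<^sup>2 * ln (real n) - 4 / \<tau>\<^sup>2 * ln (4 / \<tau>\<^sup>2 * ln (real n)) - 12 * ln 2 / \<tau>\<^sup>2"
    note F = K[OF kK]
    have k1: "k \<ge> 1" using F by simp
    show "Var_Gamma k \<tau> n / (E_Gamma k \<tau> n)\<^sup>2 \<le> 1 / (real k)\<^sup>2"
    proof (cases "n < k")
      case True
      then have "E_Gamma k \<tau> n = 0" unfolding E_formula[OF k1] by (simp add: US_def KS_empty)
      then show ?thesis by simp
    next
      case False
      then have kn: "k \<le> n" by simp
      have nbig: "8 * real k * exp (\<tau>\<^sup>2 * real k / 4) \<le> real n"
        using derive_n[OF assms _ kn _ hyp] F by blast
      show ?thesis using main_bound[OF assms _ kn _ _ _ _ nbig] F by blast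
    qed
  qed
qed

end
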